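(* Let $\gamma: I \to M$ be a unit speed curve on a smooth oriented surface $M \subset E^3$ with Darboux frame $\{T, V, U\}$, normal curvature $k_n$, geodesic curvature $k_g$ (nowhere zero) and geodesic torsion $\tau_g$, and suppose the position vector of $\gamma$ always lies in the plane spanned by $\{T, U\}$, i.e. $\gamma(s) = \lambda_1(s) T(s) + \lambda_2(s) U(s)$ for some differentiable functions $\lambda_1, \lambda_2$. Then $\gamma$ is a relatively normal-slant helix if and only if the function $$s \mapsto \frac{k_g^2}{(k_g^2 + \tau_g^2)^{3/2}}\, e^{\int \frac{\tau_g k_n}{k_g}\, ds}$$ is constant.
   Context: For a unit speed curve $\gamma$ on an oriented surface $M\subset E^3$, the Darboux frame is $T=\gamma'$, $U$ = unit normal of $M$ along $\gamma$, $V = U\times T$, satisfying $T' = k_g V + k_n U$, $V' = -k_g T + \tau_g U$, $U' = -k_n T - \tau_g V$; here $k_g$, $k_n$, $\tau_g$ are the geodesic curvature, normal curvature and geodesic torsion. The curve $\gamma$ is a relatively normal-slant helix if there is a fixed unit vector $d$ and a constant angle $\phi$ with $\langle V, d\rangle = \cos\phi$ along $\gamma$. The "position vector" is $\gamma(s)$ regarded as a vector from the origin. $\int \cdot\, ds$ denotes an antiderivative. *)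

theory Defs
  imports "HOL-Analysis.Analysis"
begin

text \<open>A curve with Darboux frame (T, V, U) along it: T is the unit tangent, U a unit vector
normal to T (the surface normal), V = U x T, and the Darboux equations hold with
geodesic curvature kg, normal curvature kn, geodesic torsion tg.\<close>

definition darboux_curve ::
  "real set \<Rightarrow> (real \<Rightarrow> real^3) \<Rightarrow> (real \<Rightarrow> real^3) \<Rightarrow> (real \<Rightarrow> real^3) \<Rightarrow> (real \<Rightarrow> real^3)
   \<Rightarrow> (real \<Rightarrow> real) \<Rightarrow> (real \<Rightarrow> real) \<Rightarrow> (real \<Rightarrow> real) \<Rightarrow> bool" where
  "darboux_curve I \<gamma> T V U kg kn tg \<longleftrightarrow>
     (\<forall>s\<in>I.
        (\<gamma> has_vector_derivative T s) (at s) \<and>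
        norm (T s) = 1 \<and> norm (U s) = 1 \<and> T s \<bullet> U s = 0 \<and>
        V s = cross3 (U s) (T s) \<and>
        (T has_vector_derivative (kg s *\<^sub>R V s + kn s *\<^sub>R U s)) (at s) \<and>
        (V has_vector_derivative (- kg s *\<^sub>R T s + tg s *\<^sub>R U s)) (at s) \<and>
        (U has_vector_derivative (- kn s *\<^sub>R T s - tg s *\<^sub>R V s)) (at s) \<and>
        kg differentiable (at s) \<and> kn differentiable (at s) \<and> tg differentiable (at s))"

definition rel_normal_slant_helix :: "real set \<Rightarrow> (real \<Rightarrow> real^3) \<Rightarrow> bool" where
  "rel_normal_slant_helix I V \<longleftrightarrow>
     (\<exists>d::real^3. \<exists>\<phi>::real. norm d = 1 \<and> (\<forall>s\<in>I. V s \<bullet> d = cos \<phi>))"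

end

theory Submission imports Defs begin
lemma inner_vd:
  fixes f g :: "real \<Rightarrow> 'a::real_inner"
  assumes "(f has_vector_derivative f') (at x)" "(g has_vector_derivative g') (at x)"
  shows "((\<lambda>x. f x \<bullet> g x) has_real_derivative (f x \<bullet> g' + f' \<bullet> g x)) (at x)"
  using bounded_bilinear.has_vector_derivative[OF bounded_bilinear_inner assms]
  by (simp add: has_real_derivative_iff_has_vector_derivative)

lemma cross_cross: "cross3 (cross3 a b) c = (a \<bullet> c) *\<^sub>R b - (b \<bullet> c) *\<^sub>R a"
  by (simp add: cross3_simps forall_3)

lemma frame_facts:
  fixes T U x :: "real^3"
  assumes "norm T = 1" "norm U = 1" "T \<bullet> U = 0"
  shows "cross3 U T \<bullet> T = 0" "cross3 U T \<bullet> U = 0" "norm (cross3 U T) = 1"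
    "(norm x)^2 = (x \<bullet> T)^2 + (x \<bullet> cross3 U T)^2 + (x \<bullet> U)^2"
proof -
  show "cross3 U T \<bullet> T = 0" "cross3 U T \<bullet> U = 0" by (simp_all add: dot_cross_self)
  have "(norm (cross3 U T))^2 = 1" using norm_cross_dot[of U T] assms by (simp add: inner_commute)
  then show nV: "norm (cross3 U T) = 1" using norm_ge_zero[of "cross3 U T"] by (simp add: power2_eq_1_iff)
  have TT: "T \<bullet> T = 1" "U \<bullet> U = 1" using assms by (simp_all add: norm_eq_1)
  have "(norm (cross3 (cross3 U T) x))^2 + (cross3 U T \<bullet> x)^2 = (norm x)^2"
    using norm_cross_dot[of "cross3 U T" x] nV by simp
  moreover have "(norm (cross3 (cross3 U T) x))^2 = (x \<bullet> T)^2 + (x \<bullet> U)^2"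
    unfolding cross_cross power2_norm_eq_inner using TT assms(3)
    by (simp add: inner_diff_left inner_diff_right inner_commute power2_eq_square algebra_simps)
  ultimately show "(norm x)^2 = (x \<bullet> T)^2 + (x \<bullet> cross3 U T)^2 + (x \<bullet> U)^2"
    by (simp add: inner_commute)
qed
lemma deriv_zero_on_open:
  fixes f :: "real \<Rightarrow> real"
  assumes "(f has_real_derivative D) (at s)" "open I" "s \<in> I" "\<And>x. x\<in>I \<Longrightarrow> f x = c"
  shows "D = 0"
proof -
  have "((\<lambda>_. c) has_real_derivative D) (at s)"
    by (rule has_field_derivative_transform_within_open[OF assms(1-3)]) (use assms(4) in auto)
  then show ?thesis using DERIV_const DERIV_unique by blast
qed

theorem theorem3p2:
  fixes I :: "real set"
    and \<gamma> T V U :: "real \<Rightarrow> real^3"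
    and kg kn tg lam1 lam2 F :: "real \<Rightarrow> real"
  assumes I: "open I" "is_interval I" "I \<noteq> {}"
    and frame: "darboux_curve I \<gamma> T V U kg kn tg"
    and kg_nz: "\<forall>s\<in>I. kg s \<noteq> 0"
    and pos: "\<forall>s\<in>I. \<gamma> s = lam1 s *\<^sub>R T s + lam2 s *\<^sub>R U s"
    and lam_diff: "\<forall>s\<in>I. lam1 differentiable (at s) \<and> lam2 differentiable (at s)"
    and F: "\<forall>s\<in>I. (F has_real_derivative (tg s * kn s / kg s)) (at s)"
  shows "rel_normal_slant_helix I V \<longleftrightarrow>
    (\<exists>c. \<forall>s\<in>I. (kg s)\<^sup>2 / ((kg s)\<^sup>2 + (tg s)\<^sup>2) powr (3/2) * exp (F s) = c)"
proof -
  have cvx: "convex I" using I(2) is_interval_convex by blast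
  note fr = frame[unfolded darboux_curve_def]
  have gd: "\<And>s. s\<in>I \<Longrightarrow> (\<gamma> has_vector_derivative T s) (at s)" using fr by blast
  have Td: "\<And>s. s\<in>I \<Longrightarrow> (T has_vector_derivative (kg s *\<^sub>R V s + kn s *\<^sub>R U s)) (at s)" using fr by blast
  have Vd: "\<And>s. s\<in>I \<Longrightarrow> (V has_vector_derivative (- kg s *\<^sub>R T s + tg s *\<^sub>R U s)) (at s)" using fr by blast
  have Ud: "\<And>s. s\<in>I \<Longrightarrow> (U has_vector_derivative (- kn s *\<^sub>R T s - tg s *\<^sub>R V s)) (at s)" using fr by blast
  have kgdf: "\<And>s. s\<in>I \<Longrightarrow> kg differentiable (at s)" using fr by blast
  have tgdf: "\<And>s. s\<in>I \<Longrightarrow> tg differentiable (at s)" using fr by blast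
  have nT: "\<And>s. s\<in>I \<Longrightarrow> norm (T s) = 1" and nU: "\<And>s. s\<in>I \<Longrightarrow> norm (U s) = 1"
    and TU: "\<And>s. s\<in>I \<Longrightarrow> T s \<bullet> U s = 0" and Vc: "\<And>s. s\<in>I \<Longrightarrow> V s = cross3 (U s) (T s)"
    using fr by blast+
  have VT: "\<And>s. s\<in>I \<Longrightarrow> V s \<bullet> T s = 0" and VU: "\<And>s. s\<in>I \<Longrightarrow> V s \<bullet> U s = 0"
    and nV: "\<And>s. s\<in>I \<Longrightarrow> norm (V s) = 1"
    and pars: "\<And>s x. s\<in>I \<Longrightarrow> (norm x)^2 = (x \<bullet> T s)^2 + (x \<bullet> V s)^2 + (x \<bullet> U s)^2"
    using frame_facts nT nU TU Vc by metis+
  have TT: "\<And>s. s\<in>I \<Longrightarrow> T s \<bullet> T s = 1" "\<And>s. s\<in>I \<Longrightarrow> U s \<bullet> U s = 1"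
    "\<And>s. s\<in>I \<Longrightarrow> V s \<bullet> V s = 1"
    using nT nU nV by (simp_all add: norm_eq_1)
  have l1: "\<And>s. s\<in>I \<Longrightarrow> lam1 s = \<gamma> s \<bullet> T s" and l2: "\<And>s. s\<in>I \<Longrightarrow> lam2 s = \<gamma> s \<bullet> U s"
    and gV: "\<And>s. s\<in>I \<Longrightarrow> \<gamma> s \<bullet> V s = 0"
  proof -
    fix s assume s: "s \<in> I"
    have tu: "U s \<bullet> T s = 0" "T s \<bullet> V s = 0" "U s \<bullet> V s = 0" using TU[OF s] VT[OF s] VU[OF s] by (simp_all add: inner_commute)
    show "lam1 s = \<gamma> s \<bullet> T s" "lam2 s = \<gamma> s \<bullet> U s" "\<gamma> s \<bullet> V s = 0"
      using pos s TT[OF s] TU[OF s] tu VT[OF s] VU[OF s] by (simp_all add: inner_add_left)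
  qed
  have d1: "\<And>s. s\<in>I \<Longrightarrow> (lam1 has_real_derivative (1 + kn s * lam2 s)) (at s)"
  proof -
    fix s assume s: "s \<in> I"
    have "((\<lambda>x. \<gamma> x \<bullet> T x) has_real_derivative (\<gamma> s \<bullet> (kg s *\<^sub>R V s + kn s *\<^sub>R U s) + T s \<bullet> T s)) (at s)"
      by (rule inner_vd[OF gd[OF s] Td[OF s]])
    also have "\<gamma> s \<bullet> (kg s *\<^sub>R V s + kn s *\<^sub>R U s) + T s \<bullet> T s = 1 + kn s * lam2 s"
      using s gV[OF s] l2[OF s] TT(1)[OF s] by (simp add: inner_add_right)
    finally show "(lam1 has_real_derivative (1 + kn s * lam2 s)) (at s)"
      by (rule has_field_derivative_transform_within_open[OF _ I(1) s]) (simp add: l1)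
  qed
  have d2: "\<And>s. s\<in>I \<Longrightarrow> (lam2 has_real_derivative (- kn s * lam1 s)) (at s)"
  proof -
    fix s assume s: "s \<in> I"
    have "((\<lambda>x. \<gamma> x \<bullet> U x) has_real_derivative (\<gamma> s \<bullet> (- kn s *\<^sub>R T s - tg s *\<^sub>R V s) + T s \<bullet> U s)) (at s)"
      by (rule inner_vd[OF gd[OF s] Ud[OF s]])
    also have "\<gamma> s \<bullet> (- kn s *\<^sub>R T s - tg s *\<^sub>R V s) + T s \<bullet> U s = - kn s * lam1 s"
      using s gV[OF s] l1[OF s] TU[OF s] by (simp add: inner_diff_right)
    finally show "(lam2 has_real_derivative (- kn s * lam1 s)) (at s)"
      by (rule has_field_derivative_transform_within_open[OF _ I(1) s]) (simp add: l2)
  qed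
  have e2: "\<And>s. s\<in>I \<Longrightarrow> kg s * lam1 s = tg s * lam2 s"
  proof -
    fix s assume s: "s \<in> I"
    have "((\<lambda>x. \<gamma> x \<bullet> V x) has_real_derivative (\<gamma> s \<bullet> (- kg s *\<^sub>R T s + tg s *\<^sub>R U s) + T s \<bullet> V s)) (at s)"
      by (rule inner_vd[OF gd[OF s] Vd[OF s]])
    then have "\<gamma> s \<bullet> (- kg s *\<^sub>R T s + tg s *\<^sub>R U s) + T s \<bullet> V s = 0"
      by (rule deriv_zero_on_open[OF _ I(1) s]) (rule gV)
    then show "kg s * lam1 s = tg s * lam2 s"
      using s l1[OF s] l2[OF s] VT[OF s] by (simp add: inner_add_right inner_diff_right inner_commute)
  qed
  have nz: "\<And>s. s\<in>I \<Longrightarrow> lam2 s \<noteq> 0"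
  proof
    fix s assume s: "s \<in> I" and z: "lam2 s = 0"
    have z1: "lam1 s = 0" using e2[OF s] z kg_nz s by simp
    obtain kg' where kg': "(kg has_real_derivative kg') (at s)" using kgdf[OF s] real_differentiable_def by blast
    obtain tg' where tg': "(tg has_real_derivative tg') (at s)" using tgdf[OF s] real_differentiable_def by blast
    have "((\<lambda>x. tg x * lam2 x - kg x * lam1 x) has_real_derivative
       (tg' * lam2 s + (- kn s * lam1 s) * tg s - (kg' * lam1 s + (1 + kn s * lam2 s) * kg s))) (at s)"
      by (rule DERIV_diff[OF DERIV_mult[OF tg' d2[OF s]] DERIV_mult[OF kg' d1[OF s]]])
    then have "tg' * lam2 s + (- kn s * lam1 s) * tg s - (kg' * lam1 s + (1 + kn s * lam2 s) * kg s) = 0"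
      by (rule deriv_zero_on_open[OF _ I(1) s, where c=0]) (simp add: e2)
    then show False using z z1 kg_nz s by simp
  qed
  define E where "E s = exp (F s) * lam2 s" for s
  obtain cE where cE: "\<And>s. s\<in>I \<Longrightarrow> E s = cE"
  proof -
    have "\<exists>c. \<forall>s\<in>I. E s = c"
    proof (rule has_field_derivative_zero_constant[OF cvx])
      fix s assume s: "s \<in> I"
      have "(E has_real_derivative (exp (F s) * (tg s * kn s / kg s) * lam2 s + (- kn s * lam1 s) * exp (F s))) (at s)"
        unfolding E_def[abs_def] by (rule DERIV_mult[OF DERIV_fun_exp[OF F[rule_format, OF s]] d2[OF s]])
      also have "exp (F s) * (tg s * kn s / kg s) * lam2 s + (- kn s * lam1 s) * exp (F s) = 0"
        using e2[OF s] kg_nz s by (simp add: field_simps)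
      finally show "(E has_real_derivative 0) (at s within I)" by (rule has_field_derivative_at_within)
    qed
    then show ?thesis using that by blast
  qed
  define n where "n s = (lam1 s)^2 + (lam2 s)^2" for s
  define m where "m s = kg s * n s / (lam2 s)^2" for s
  define K where "K s = (m s)^2 * n s" for s
  define G where "G s = (kg s)\<^sup>2 / ((kg s)\<^sup>2 + (tg s)\<^sup>2) powr (3/2) * exp (F s)" for s
  have npos: "\<And>s. s\<in>I \<Longrightarrow> n s > 0" using nz unfolding n_def by (simp add: add_nonneg_pos)
  have Kpos: "\<And>s. s\<in>I \<Longrightarrow> K s > 0"
  proof -
    fix s assume s: "s \<in> I"
    have "m s \<noteq> 0" using nz[OF s] npos[OF s] kg_nz s unfolding m_def by simp
    then show "K s > 0" using npos[OF s] unfolding K_def by simp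
  qed
  have Gpos: "\<And>s. s\<in>I \<Longrightarrow> G s > 0" using kg_nz unfolding G_def by simp
  have GK: "\<And>s. s\<in>I \<Longrightarrow> (G s)^2 * K s = cE^2"
  proof -
    fix s assume s: "s \<in> I"
    define q where "q = (kg s)\<^sup>2 + (tg s)\<^sup>2"
    have qpos: "q > 0" using kg_nz s unfolding q_def by (simp add: add_pos_nonneg)
    have tgv: "tg s = kg s * lam1 s / lam2 s" using e2[OF s] nz[OF s] by (simp add: field_simps)
    have q: "q = (kg s)^2 * n s / (lam2 s)^2" unfolding q_def n_def tgv using nz[OF s]
      by (simp add: field_simps power2_eq_square)
    have qq: "(q powr (3/2))^2 = q^3"
    proof -
      have "(q powr (3/2))^2 = q powr (3/2) * q powr (3/2)" by (simp add: power2_eq_square)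
      also have "\<dots> = q powr 3" by (simp add: powr_add[symmetric])
      also have "\<dots> = q^3" using powr_realpow[OF qpos, of 3] by simp
      finally show ?thesis .
    qed
    have "(G s)^2 = (kg s)^4 * (exp (F s))^2 / q^3"
      unfolding G_def q_def[symmetric] using qq by (simp add: power_mult_distrib power_divide)
    then have "(G s)^2 * K s = (kg s)^4 * (exp (F s))^2 / q^3 * K s" by simp
    also have "\<dots> = (exp (F s) * lam2 s)^2"
      unfolding q K_def m_def using nz[OF s] npos[OF s] kg_nz s
      by (simp add: field_simps power2_eq_square power3_eq_cube power4_eq_xxxx)
    finally show "(G s)^2 * K s = cE^2" using cE[OF s] unfolding E_def by simp
  qed
  obtain s0 where s0: "s0 \<in> I" using I(3) by blast
  have cEnz: "cE \<noteq> 0" using cE[OF s0] nz[OF s0] unfolding E_def by auto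
  have GKeq: "(\<exists>c. \<forall>s\<in>I. G s = c) \<longleftrightarrow> (\<exists>c. \<forall>s\<in>I. K s = c)"
  proof
    assume "\<exists>c. \<forall>s\<in>I. G s = c"
    then obtain c where c: "\<And>s. s\<in>I \<Longrightarrow> G s = c" by blast
    have "\<And>s. s\<in>I \<Longrightarrow> K s = cE^2 / c^2"
      using GK c Gpos by (metis nonzero_eq_divide_eq mult.commute power_not_zero order_less_irrefl)
    then show "\<exists>c. \<forall>s\<in>I. K s = c" by blast
  next
    assume "\<exists>c. \<forall>s\<in>I. K s = c"
    then obtain c where c: "\<And>s. s\<in>I \<Longrightarrow> K s = c" by blast
    have "\<And>s. s\<in>I \<Longrightarrow> G s = sqrt (cE^2 / c)"
    proof -
      fix s assume s: "s \<in> I"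
      have "(G s)^2 = cE^2 / c" using GK[OF s] c[OF s] Kpos[OF s] by (simp add: field_simps)
      then show "G s = sqrt (cE^2 / c)" using Gpos[OF s] by (metis real_sqrt_unique less_imp_le)
    qed
    then show "\<exists>c. \<forall>s\<in>I. G s = c" by blast
  qed
  have HK: "rel_normal_slant_helix I V \<longleftrightarrow> (\<exists>c. \<forall>s\<in>I. K s = c)"
  proof
    assume "rel_normal_slant_helix I V"
    then obtain d \<phi> where nd: "norm d = 1" and hv: "\<And>s. s\<in>I \<Longrightarrow> V s \<bullet> d = cos \<phi>"
      unfolding rel_normal_slant_helix_def by blast
    define c where "c = cos \<phi>"
    define ft where "ft x = T x \<bullet> d" for x
    define fu where "fu x = U x \<bullet> d" for x
    have dconst: "\<And>s. ((\<lambda>x. d) has_vector_derivative 0) (at s)" by (rule has_vector_derivative_const)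
    have h1: "\<And>s. s\<in>I \<Longrightarrow> lam2 s * ft s = lam1 s * fu s"
    proof -
      fix s assume s: "s \<in> I"
      have "((\<lambda>x. V x \<bullet> d) has_real_derivative (V s \<bullet> 0 + (- kg s *\<^sub>R T s + tg s *\<^sub>R U s) \<bullet> d)) (at s)"
        by (rule inner_vd[OF Vd[OF s] dconst])
      then have "V s \<bullet> 0 + (- kg s *\<^sub>R T s + tg s *\<^sub>R U s) \<bullet> d = 0"
        by (rule deriv_zero_on_open[OF _ I(1) s]) (rule hv)
      then have "kg s * ft s = tg s * fu s" unfolding ft_def fu_def by (simp add: inner_add_left inner_diff_left)
      then have "kg s * (lam2 s * ft s) = kg s * (lam1 s * fu s)"
        using e2[OF s] by (metis mult.left_commute mult.commute)
      then show "lam2 s * ft s = lam1 s * fu s" using kg_nz s by simp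
    qed
    have h2: "\<And>s. s\<in>I \<Longrightarrow> fu s = c * (lam2 s * kg s + lam1 s * tg s)"
    proof -
      fix s assume s: "s \<in> I"
      have "((\<lambda>x. T x \<bullet> d) has_real_derivative (T s \<bullet> 0 + (kg s *\<^sub>R V s + kn s *\<^sub>R U s) \<bullet> d)) (at s)"
        by (rule inner_vd[OF Td[OF s] dconst])
      also have "T s \<bullet> 0 + (kg s *\<^sub>R V s + kn s *\<^sub>R U s) \<bullet> d = kg s * c + kn s * fu s"
        using hv[OF s] unfolding c_def fu_def by (simp add: inner_add_left)
      finally have dft: "(ft has_real_derivative (kg s * c + kn s * fu s)) (at s)"
        unfolding ft_def[abs_def] .
      have "((\<lambda>x. U x \<bullet> d) has_real_derivative (U s \<bullet> 0 + (- kn s *\<^sub>R T s - tg s *\<^sub>R V s) \<bullet> d)) (at s)"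
        by (rule inner_vd[OF Ud[OF s] dconst])
      also have "U s \<bullet> 0 + (- kn s *\<^sub>R T s - tg s *\<^sub>R V s) \<bullet> d = - kn s * ft s - tg s * c"
        using hv[OF s] unfolding c_def ft_def by (simp add: inner_diff_left)
      finally have dfu: "(fu has_real_derivative (- kn s * ft s - tg s * c)) (at s)"
        unfolding fu_def[abs_def] .
      have "((\<lambda>x. lam2 x * ft x - lam1 x * fu x) has_real_derivative
          ((- kn s * lam1 s) * ft s + (kg s * c + kn s * fu s) * lam2 s
           - ((1 + kn s * lam2 s) * fu s + (- kn s * ft s - tg s * c) * lam1 s))) (at s)"
        by (rule DERIV_diff[OF DERIV_mult[OF d2[OF s] dft] DERIV_mult[OF d1[OF s] dfu]])
      then have "(- kn s * lam1 s) * ft s + (kg s * c + kn s * fu s) * lam2 s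
           - ((1 + kn s * lam2 s) * fu s + (- kn s * ft s - tg s * c) * lam1 s) = 0"
        by (rule deriv_zero_on_open[OF _ I(1) s, where c=0]) (simp add: h1)
      then show "fu s = c * (lam2 s * kg s + lam1 s * tg s)" by (simp add: algebra_simps)
    qed
    have h3: "\<And>s. s\<in>I \<Longrightarrow> c^2 * (1 + K s) = 1"
    proof -
      fix s assume s: "s \<in> I"
      have p: "1 = (ft s)^2 + c^2 + (fu s)^2"
        using pars[OF s, of d] nd hv[OF s] unfolding ft_def fu_def c_def by (simp add: inner_commute)
      have l2n: "lam2 s \<noteq> 0" by (rule nz[OF s])
      have tgv: "tg s = kg s * lam1 s / lam2 s" using e2[OF s] l2n by (simp add: field_simps)
      have ftv: "ft s = lam1 s * fu s / lam2 s" using h1[OF s] l2n by (simp add: field_simps)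
      have mu: "lam2 s * kg s + lam1 s * tg s = kg s * n s / lam2 s"
        unfolding tgv n_def using l2n by (simp add: field_simps power2_eq_square)
      have fuv: "fu s = c * kg s * n s / lam2 s" using h2[OF s] mu by simp
      have "(ft s)^2 + (fu s)^2 = (fu s)^2 * n s / (lam2 s)^2"
        unfolding ftv n_def using l2n by (simp add: field_simps power2_eq_square)
      also have "\<dots> = c^2 * K s"
        unfolding fuv K_def m_def using l2n by (simp add: field_simps power2_eq_square)
      finally show "c^2 * (1 + K s) = 1" using p by (simp add: algebra_simps)
    qed
    have "c \<noteq> 0" using h3[OF s0] by auto
    then have "\<And>s. s\<in>I \<Longrightarrow> K s = 1 / c^2 - 1" using h3 by (simp add: field_simps)
    then show "\<exists>c. \<forall>s\<in>I. K s = c" by blast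
  next
    assume "\<exists>c. \<forall>s\<in>I. K s = c"
    then obtain cK where cK: "\<And>s. s\<in>I \<Longrightarrow> K s = cK" by blast
    define R where "R x = m x *\<^sub>R \<gamma> x + V x" for x
    have Rd: "\<And>s. s\<in>I \<Longrightarrow> (R has_vector_derivative 0) (at s)"
    proof -
      fix s assume s: "s \<in> I"
      have l2n: "lam2 s \<noteq> 0" by (rule nz[OF s])
      have "m differentiable (at s)"
        unfolding m_def[abs_def] n_def[abs_def] using kgdf[OF s] lam_diff s l2n
        by (intro differentiable_divide differentiable_mult differentiable_add differentiable_power) auto
      then obtain mm where mm: "(m has_real_derivative mm) (at s)" using real_differentiable_def by blast
      note kd = DERIV_mult[OF DERIV_power[OF mm, of 2] DERIV_add[OF DERIV_power[OF d1[OF s], of 2] DERIV_power[OF d2[OF s], of 2]]]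
      have kz: "of_nat 2 * (mm * m s ^ (2 - Suc 0)) * ((lam1 s)^2 + (lam2 s)^2) +
          (of_nat 2 * ((1 + kn s * lam2 s) * lam1 s ^ (2 - Suc 0)) + of_nat 2 * ((- kn s * lam1 s) * lam2 s ^ (2 - Suc 0))) * (m s)^2 = 0"
        by (rule deriv_zero_on_open[OF kd I(1) s, where c=cK]) (use cK in \<open>simp add: K_def n_def\<close>)
      then have k0: "m s * (mm * n s + lam1 s * m s) = 0" unfolding n_def by (simp add: algebra_simps power2_eq_square)
      have "m s \<noteq> 0" using nz[OF s] npos[OF s] kg_nz s unfolding m_def by simp
      with k0 have k1: "mm * n s + lam1 s * m s = 0" by simp
      have tgv: "tg s = kg s * lam1 s / lam2 s" using e2[OF s] l2n by (simp add: field_simps)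
      have "(kg s * lam1 s + mm * (lam2 s)^2) * n s = 0"
        using k1 l2n unfolding m_def by (simp add: field_simps power2_eq_square)
      then have "kg s * lam1 s + mm * (lam2 s)^2 = 0" using npos[OF s] by simp
      then have mmv: "mm = - tg s / lam2 s"
        using l2n unfolding tgv by (simp add: field_simps power2_eq_square)
      have c1: "m s + mm * lam1 s - kg s = 0"
        unfolding mmv tgv m_def n_def using l2n by (simp add: field_simps power2_eq_square)
      have c2: "mm * lam2 s + tg s = 0" unfolding mmv using l2n by simp
      have "(R has_vector_derivative (m s *\<^sub>R T s + mm *\<^sub>R \<gamma> s + (- kg s *\<^sub>R T s + tg s *\<^sub>R U s))) (at s)"
        unfolding R_def[abs_def] by (intro has_vector_derivative_add has_vector_derivative_scaleR mm gd[OF s] Vd[OF s])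
      also have "m s *\<^sub>R T s + mm *\<^sub>R \<gamma> s + (- kg s *\<^sub>R T s + tg s *\<^sub>R U s)
          = (m s + mm * lam1 s - kg s) *\<^sub>R T s + (mm * lam2 s + tg s) *\<^sub>R U s"
        using pos s by (simp add: algebra_simps)
      also have "\<dots> = 0" using c1 c2 by simp
      finally show "(R has_vector_derivative 0) (at s)" .
    qed
    obtain R0 where R0: "\<And>s. s\<in>I \<Longrightarrow> R s = R0"
      using has_vector_derivative_zero_constant[OF cvx, of R] Rd has_vector_derivative_at_within by blast
    have VR: "\<And>s. s\<in>I \<Longrightarrow> V s \<bullet> R0 = 1"
    proof -
      fix s assume s: "s \<in> I"
      have "V s \<bullet> R s = 1" unfolding R_def using gV[OF s] TT(3)[OF s]
        by (simp add: inner_add_right inner_commute)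
      then show "V s \<bullet> R0 = 1" using R0[OF s] by simp
    qed
    have "1 \<le> norm R0" using norm_cauchy_schwarz[of "V s0" R0] VR[OF s0] nV[OF s0] by simp
    then have Rp: "norm R0 > 0" by linarith
    define d where "d = (1 / norm R0) *\<^sub>R R0"
    have nd: "norm d = 1" unfolding d_def using Rp by simp
    have ca: "cos (arccos (1 / norm R0)) = 1 / norm R0"
      using \<open>1 \<le> norm R0\<close> Rp by (intro cos_arccos) (simp_all add: field_simps)
    have "\<And>s. s\<in>I \<Longrightarrow> V s \<bullet> d = cos (arccos (1 / norm R0))"
      unfolding ca
      using VR Rp \<open>1 \<le> norm R0\<close> unfolding d_def by simp
    then show "rel_normal_slant_helix I V" unfolding rel_normal_slant_helix_def using nd by blast
  qed
  show ?thesis using HK GKeq unfolding G_def by simp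
qed
end
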